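(* Let $S$ be an inverse semigroup, let $\alpha$ be an automorphism of $S$, and define $\psi : S\to S$ by $x\psi = x^{-1}\cdot (x\alpha)$ for all $x\in S$. Then: (1) If $\mathrm{Fix}(\alpha) = E(S)$, then $\psi$ is injective. (2) If $\psi$ is injective, then $\mathrm{Fix}(\alpha)\subseteq E(S)$.
   Context: In an inverse semigroup $S$, $x^{-1}$ denotes the unique inverse of $x$ (the unique element with $xx^{-1}x=x$ and $x^{-1}xx^{-1}=x^{-1}$). $E(S)$ is the set of idempotents of $S$; for an automorphism $\alpha$ of $S$ (written on the right, $x\mapsto x\alpha$), $\mathrm{Fix}(\alpha) = \{x\in S \mid x\alpha = x\}$. *)

theory Defs
  imports Main
begin

definition is_inv :: "'a::semigroup_mult \<Rightarrow> 'a \<Rightarrow> bool" where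
  "is_inv x y \<longleftrightarrow> x * y * x = x \<and> y * x * y = y"

definition inverse_semigroup :: "'a::semigroup_mult itself \<Rightarrow> bool" where
  "inverse_semigroup _ \<longleftrightarrow> (\<forall>x::'a. \<exists>!y. is_inv x y)"

definition sinv :: "'a::semigroup_mult \<Rightarrow> 'a" where
  "sinv x = (THE y. is_inv x y)"

definition idempotents :: "'a::semigroup_mult set" where
  "idempotents = {e. e * e = e}"

definition semigroup_aut :: "('a::semigroup_mult \<Rightarrow> 'a) \<Rightarrow> bool" where
  "semigroup_aut f \<longleftrightarrow> bij f \<and> (\<forall>x y. f (x * y) = f x * f y)"

definition Fix :: "('a \<Rightarrow> 'a) \<Rightarrow> 'a set" where
  "Fix f = {x. f x = x}"

end

theory Submission
  imports Defs
begin

context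
  fixes T :: "'a::semigroup_mult itself"
  assumes IS: "inverse_semigroup T"
begin

lemma inv_ok: "is_inv (x::'a) (sinv x)"
proof -
  have "\<exists>!y. is_inv x y" using IS unfolding inverse_semigroup_def by blast
  thus ?thesis unfolding sinv_def by (rule theI')
qed

lemma inv_uniq: "is_inv (x::'a) y \<Longrightarrow> y = sinv x"
proof -
  assume a: "is_inv x y"
  have "\<exists>!y. is_inv x y" using IS unfolding inverse_semigroup_def by blast
  thus ?thesis using a inv_ok[of x] by blast
qed

lemma inv1: "(x::'a) * sinv x * x = x" using inv_ok[of x] by (simp add: is_inv_def)
lemma inv2: "sinv (x::'a) * x * sinv x = sinv x" using inv_ok[of x] by (simp add: is_inv_def)

lemma inv_inv: "sinv (sinv (x::'a)) = x"
  using inv_uniq[of "sinv x" x] inv1 inv2 by (simp add: is_inv_def)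

lemma idem_inv: "(e::'a) * e = e \<Longrightarrow> sinv e = e"
  using inv_uniq[of e e] by (simp add: is_inv_def)

lemma idem_prod: "(e::'a) * e = e \<Longrightarrow> f * f = f \<Longrightarrow> (e * f) * (e * f) = e * f"
proof -
  assume e: "e * e = e" and f: "f * f = f"
  define u where "u = sinv (e * f)"
  have "is_inv (e*f) (f*u*e)"
  proof -
    have e2: "\<And>w. e*(e*w) = e*w" using e by (metis mult.assoc)
    have f2: "\<And>w. f*(f*w) = f*w" using f by (metis mult.assoc)
    have "e*f*(f*u*e)*(e*f) = e*f*u*(e*f)" using e2 f2 by (simp add: mult.assoc)
    also have "\<dots> = e*f" using inv1[of "e*f"] by (simp add: u_def mult.assoc)
    finally have 1: "e*f*(f*u*e)*(e*f) = e*f" .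
    have "f*u*e*(e*f)*(f*u*e) = f*(u*(e*f)*u)*e" using e2 f2 by (simp add: mult.assoc)
    also have "\<dots> = f*u*e" using inv2[of "e*f"] by (simp add: u_def mult.assoc)
    finally show ?thesis using 1 by (simp add: is_inv_def)
  qed
  hence ue: "u = f*u*e" using inv_uniq u_def by metis
  have "u*u = f*(u*(e*f)*u)*e" using e f ue by (metis mult.assoc)
  also have "u*(e*f)*u = u" using inv2[of "e*f"] by (simp add: u_def)
  finally have uu: "u*u = u" using ue by simp
  have "is_inv u (e*f)" using inv1[of "e*f"] inv2[of "e*f"] by (simp add: is_inv_def u_def)
  hence "e*f = sinv u" by (rule inv_uniq)
  also have "\<dots> = u" using uu by (rule idem_inv)
  finally have "e*f = u" .
  thus ?thesis using uu by simp
qed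

lemma idem_comm: "(e::'a) * e = e \<Longrightarrow> f * f = f \<Longrightarrow> e * f = f * e"
proof -
  assume e: "e * e = e" and f: "f * f = f"
  have ef: "(e*f)*(e*f) = e*f" using idem_prod e f by blast
  have fe: "(f*e)*(f*e) = f*e" using idem_prod e f by blast
  have "is_inv (e*f) (f*e)" unfolding is_inv_def
    using ef fe e f by (metis mult.assoc)
  hence "f*e = sinv (e*f)" by (rule inv_uniq)
  thus ?thesis using idem_inv[OF ef] by simp
qed

lemma xx_idem: "((x::'a) * sinv x) * (x * sinv x) = x * sinv x"
  using inv1[of x] by (metis mult.assoc)
lemma xx_idem2: "(sinv (x::'a) * x) * (sinv x * x) = sinv x * x"
  using inv2[of x] by (metis mult.assoc)

lemma inv_mult: "sinv ((u::'a) * v) = sinv v * sinv u"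
proof -
  have c: "(v * sinv v) * (sinv u * u) = (sinv u * u) * (v * sinv v)"
    using idem_comm xx_idem xx_idem2 by blast
  have c2: "\<And>w. v * (sinv v * (sinv u * (u * w))) = sinv u * (u * (v * (sinv v * w)))"
    using c by (metis mult.assoc)
  have 1: "u*v*(sinv v*sinv u)*(u*v) = u*v"
  proof -
    have "u*v*(sinv v*sinv u)*(u*v) = u*((v*sinv v)*(sinv u*u))*v" by (simp add: mult.assoc)
    also have "\<dots> = (u*sinv u*u)*(v*sinv v*v)" using c2 by (simp add: mult.assoc)
    finally show ?thesis using inv1 by simp
  qed
  have 2: "sinv v*sinv u*(u*v)*(sinv v*sinv u) = sinv v*sinv u"
  proof -
    have "sinv v*sinv u*(u*v)*(sinv v*sinv u) = sinv v*((sinv u*u)*(v*sinv v))*sinv u" by (simp add: mult.assoc)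
    also have "\<dots> = (sinv v*v*sinv v)*(sinv u*u*sinv u)" using c2 by (simp add: mult.assoc)
    finally show ?thesis using inv2 by simp
  qed
  show ?thesis using inv_uniq 1 2 by (simp add: is_inv_def)
qed

lemma aut_inv: "semigroup_aut alpha \<Longrightarrow> alpha (sinv (x::'a)) = sinv (alpha x)"
  unfolding semigroup_aut_def
  by (rule inv_uniq) (metis inv1 inv2 is_inv_def)

end

theorem lemma2p1:
  fixes alpha :: "'a::semigroup_mult \<Rightarrow> 'a"
  assumes "inverse_semigroup TYPE('a)"
    and "semigroup_aut alpha"
  defines "psi \<equiv> (\<lambda>x. sinv x * alpha x)"
  shows "(Fix alpha = idempotents \<longrightarrow> inj psi) \<and> (inj psi \<longrightarrow> Fix alpha \<subseteq> idempotents)"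
proof
  note IS = assms(1)
  have hom: "\<And>x y. alpha (x*y) = alpha x * alpha y" using assms(2) by (simp add: semigroup_aut_def)
  have ai: "\<And>x. alpha (sinv x) = sinv (alpha x)" using aut_inv[OF IS assms(2)] .
  show "Fix alpha = idempotents \<longrightarrow> inj psi"
  proof
    assume F: "Fix alpha = idempotents"
    have fx: "\<And>e. e*e = e \<Longrightarrow> alpha e = e" using F by (auto simp: Fix_def idempotents_def)
    have fi: "\<And>z. alpha z = z \<Longrightarrow> z*z = z" using F by (auto simp: Fix_def idempotents_def)
    have key1: "\<And>x. x * psi x = alpha x"
    proof -
      fix x
      have "alpha (x * sinv x) = x * sinv x" using fx xx_idem[OF IS] by blast
      hence "alpha x * sinv (alpha x) = x * sinv x" using hom ai by simp
      hence "x * psi x = alpha x * sinv (alpha x) * alpha x" by (simp add: psi_def mult.assoc)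
      thus "x * psi x = alpha x" using inv1[OF IS] by simp
    qed
    have key2: "\<And>x. psi x * sinv (psi x) = sinv x * x"
    proof -
      fix x
      have "alpha (sinv x * x) = sinv x * x" using fx xx_idem2[OF IS] by blast
      hence e: "sinv (alpha x) * alpha x = sinv x * x" using hom ai by simp
      have "psi x * sinv (psi x) = sinv x * (alpha x * sinv (alpha x)) * x"
        by (simp add: psi_def inv_mult[OF IS] inv_inv[OF IS] mult.assoc)
      also have "\<dots> = sinv x * (x * sinv x) * x"
        using fx[OF xx_idem[OF IS, of x]] hom ai by simp
      also have "\<dots> = sinv x * x" using inv2[OF IS] by (metis mult.assoc xx_idem2[OF IS])
      finally show "psi x * sinv (psi x) = sinv x * x" .
    qed
    show "inj psi"
    proof (rule injI)
      fix x y assume p: "psi x = psi y"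
      have xy: "sinv x * x = sinv y * y" using key2 p by metis
      define z where "z = x * sinv y"
      have "alpha z = x * psi x * sinv (y * psi y)" using key1 hom ai z_def by simp
      also have "\<dots> = x * (psi x * sinv (psi x)) * sinv y"
        using p by (simp add: inv_mult[OF IS] mult.assoc)
      also have "\<dots> = x * sinv x * x * sinv y" using key2 by (simp add: mult.assoc)
      also have "\<dots> = z" using inv1[OF IS] z_def by simp
      finally have zz: "z*z = z" using fi by blast
      have "sinv z = y * sinv x" using z_def inv_mult[OF IS] inv_inv[OF IS] by simp
      hence yx: "y * sinv x = z" using idem_inv[OF IS zz] by simp
      have zy: "z * y = x"
      proof -
        have "z * y = x * (sinv y * y)" by (simp add: z_def mult.assoc)
        also have "\<dots> = x * sinv x * x" using xy by (simp add: mult.assoc)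
        finally show ?thesis using inv1[OF IS] by simp
      qed
      have zx: "z * x = y"
      proof -
        have "z * x = y * (sinv x * x)" using yx by (metis mult.assoc)
        also have "\<dots> = y * sinv y * y" using xy by (simp add: mult.assoc)
        finally show ?thesis using inv1[OF IS] by simp
      qed
      have "y = z * (z * y)" using zx zy by simp
      also have "\<dots> = z * y" using zz by (metis mult.assoc)
      finally show "x = y" using zy by simp
    qed
  qed
next
  note IS = assms(1)
  have hom: "\<And>x y. alpha (x*y) = alpha x * alpha y" using assms(2) by (simp add: semigroup_aut_def)
  have ai: "\<And>x. alpha (sinv x) = sinv (alpha x)" using aut_inv[OF IS assms(2)] .
  show "inj psi \<longrightarrow> Fix alpha \<subseteq> idempotents"
  proof (intro impI subsetI)
    fix x assume I: "inj psi" and xf: "x \<in> Fix alpha"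
    hence ax: "alpha x = x" by (simp add: Fix_def)
    define e where "e = sinv x * x"
    have ee: "e*e = e" using xx_idem2[OF IS] e_def by simp
    have "psi e = e * (sinv x * x)" using idem_inv[OF IS ee] hom ai ax by (simp add: psi_def e_def)
    also have "\<dots> = psi x" using ee ax by (simp add: psi_def e_def)
    finally have "e = x" using I by (simp add: inj_eq)
    thus "x \<in> idempotents" using ee by (simp add: idempotents_def)
  qed
qed

end
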